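(* Let $n\ge1$, let $f$ be a rational function in $z_1,\dots,z_n$, and let $T\subseteq\mathbb C^n$ be a connected multicircular domain on which $f$ is holomorphic and such that the lowest power of $z_n$ occurring in the Laurent series expansion of $f$ on $T$ equals minus the order of the pole $z_n=0$ of $f$. Let $S$ be a nonempty open subset of $T$ and let $S'$ be the image of $S$ under the projection $(z_1,\dots,z_n)\mapsto(z_1,\dots,z_{n-1})$. Let $a_{k_1\dots k_n}\in\mathbb C$ ($k_i\in\mathbb Z$) be such that for each fixed $k_n\in\mathbb Z$ the series $\sum_{k_1,\dots,k_{n-1}\in\mathbb Z}a_{k_1\dots k_n}z_1^{k_1}\cdots z_{n-1}^{k_{n-1}}$ converges absolutely for every $(z_1,\dots,z_{n-1})\in S'$, and such that the series $$\sum_{k_n\in\mathbb Z}\Big(\sum_{k_1,\dots,k_{n-1}\in\mathbb Z}a_{k_1\dots k_n}z_1^{k_1}\cdots z_{n-1}^{k_{n-1}}\Big)z_n^{k_n},$$ regarded as a single series whose terms are the bracketed sums times $z_n^{k_n}$, is lower-truncated in $z_n$ (only finitely many negative $k_n$ with nonzero term) and converges to $f(z_1,\dots,z_n)$ for every $(z_1,\dots,z_n)\in S$. Then the Laurent series $\sum_{k_1,\dots,k_n\in\mathbb Z}a_{k_1\dots k_n}z_1^{k_1}\cdots z_n^{k_n}$ converges absolutely to $f(z_1,\dots,z_n)$ for every $(z_1,\dots,z_n)\in T$.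
   Context: A multicircular domain (centered at the origin) is an open subset $T\subseteq\mathbb C^n$ such that $(z_1,\dots,z_n)\in T$ implies $(z_1e^{i\theta_1},\dots,z_ne^{i\theta_n})\in T$ for all $\theta_1,\dots,\theta_n\in\mathbb R$. A holomorphic function on a connected multicircular domain has a unique Laurent series expansion centered at $0$ converging absolutely to it on the domain. *)

theory Defs
  imports "HOL-Analysis.Analysis"
begin

text \<open>Points of C^n are functions nat => complex vanishing at indices >= n
  (coordinate z_j of the paper is z (j-1)); C^n carries the subspace topology
  of the product topology on nat => complex, which is the Euclidean one.\<close>

definition Cn :: "nat \<Rightarrow> (nat \<Rightarrow> complex) set" where
  "Cn n = {z. \<forall>i\<ge>n. z i = 0}"

definition idx :: "nat \<Rightarrow> (nat \<Rightarrow> int) set" where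
  "idx n = {k. \<forall>i\<ge>n. k i = 0}"

definition multicircular :: "nat \<Rightarrow> (nat \<Rightarrow> complex) set \<Rightarrow> bool" where
  "multicircular n T \<longleftrightarrow> T \<subseteq> Cn n \<and>
     (\<forall>z\<in>T. \<forall>\<theta>::nat\<Rightarrow>real. (\<lambda>i. z i * exp (\<i> * of_real (\<theta> i))) \<in> T)"

definition domain_in :: "nat \<Rightarrow> (nat \<Rightarrow> complex) set \<Rightarrow> bool" where
  "domain_in n T \<longleftrightarrow> T \<subseteq> Cn n \<and> openin (top_of_set (Cn n)) T \<and> connected T"

definition holo_on :: "nat \<Rightarrow> ((nat \<Rightarrow> complex) \<Rightarrow> complex) \<Rightarrow> (nat \<Rightarrow> complex) set \<Rightarrow> bool" where
  "holo_on n f T \<longleftrightarrow> continuous_on T f \<and>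
     (\<forall>z\<in>T. \<forall>i<n. (\<lambda>w. f (z(i := w))) field_differentiable
         (at (z i) within {w. z(i := w) \<in> T}))"

definition lmono :: "nat \<Rightarrow> (nat \<Rightarrow> int) \<Rightarrow> (nat \<Rightarrow> complex) \<Rightarrow> complex" where
  "lmono n k z = (\<Prod>i<n. z i powi k i)"

text \<open>The term a_k z^k is defined (no negative power of a zero coordinate
  multiplied by a nonzero coefficient).\<close>
definition terms_defined :: "nat \<Rightarrow> ((nat \<Rightarrow> int) \<Rightarrow> complex) \<Rightarrow> (nat \<Rightarrow> complex) \<Rightarrow> bool" where
  "terms_defined n a z \<longleftrightarrow> (\<forall>k\<in>idx n. a k \<noteq> 0 \<longrightarrow> (\<forall>i<n. k i < 0 \<longrightarrow> z i \<noteq> 0))"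

definition laurent_abs_conv_to ::
  "nat \<Rightarrow> ((nat \<Rightarrow> int) \<Rightarrow> complex) \<Rightarrow> (nat \<Rightarrow> complex) \<Rightarrow> complex \<Rightarrow> bool" where
  "laurent_abs_conv_to n a z s \<longleftrightarrow> terms_defined n a z \<and>
     (\<lambda>k. norm (a k * lmono n k z)) summable_on idx n \<and>
     ((\<lambda>k. a k * lmono n k z) has_sum s) (idx n)"

definition is_mpoly :: "nat \<Rightarrow> ((nat \<Rightarrow> nat) \<Rightarrow> complex) \<Rightarrow> bool" where
  "is_mpoly n c \<longleftrightarrow> finite {\<alpha>. c \<alpha> \<noteq> 0} \<and> (\<forall>\<alpha>. c \<alpha> \<noteq> 0 \<longrightarrow> (\<forall>i\<ge>n. \<alpha> i = 0))"

definition mpoly_eval :: "nat \<Rightarrow> ((nat \<Rightarrow> nat) \<Rightarrow> complex) \<Rightarrow> (nat \<Rightarrow> complex) \<Rightarrow> complex" where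
  "mpoly_eval n c z = (\<Sum>\<alpha>\<in>{\<alpha>. c \<alpha> \<noteq> 0}. c \<alpha> * (\<Prod>i<n. z i ^ \<alpha> i))"

text \<open>Multiplicity of the factor z_n (variable index n-1) in a nonzero polynomial.\<close>
definition zn_val :: "nat \<Rightarrow> ((nat \<Rightarrow> nat) \<Rightarrow> complex) \<Rightarrow> nat" where
  "zn_val n c = (LEAST m. \<exists>\<alpha>. c \<alpha> \<noteq> 0 \<and> \<alpha> (n - 1) = m)"

text \<open>Order of the pole z_n = 0 of the rational function P/Q
  (0 if there is no pole; independent of the representation P/Q).\<close>
definition pole_order_zn :: "nat \<Rightarrow> ((nat \<Rightarrow> nat) \<Rightarrow> complex) \<Rightarrow> ((nat \<Rightarrow> nat) \<Rightarrow> complex) \<Rightarrow> nat" where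
  "pole_order_zn n P Q =
     (if (\<forall>\<alpha>. P \<alpha> = 0) then 0 else nat (int (zn_val n Q) - int (zn_val n P)))"

definition proj_last :: "nat \<Rightarrow> (nat \<Rightarrow> complex) \<Rightarrow> (nat \<Rightarrow> complex)" where
  "proj_last n z = z(n - 1 := 0)"

definition inner_sum :: "nat \<Rightarrow> ((nat \<Rightarrow> int) \<Rightarrow> complex) \<Rightarrow> int \<Rightarrow> (nat \<Rightarrow> complex) \<Rightarrow> complex" where
  "inner_sum n a kn z' = infsum (\<lambda>k'. a (k'(n - 1 := kn)) * lmono (n - 1) k' z') (idx (n - 1))"

end

theory Submission
  imports Defs "HOL-Complex_Analysis.Complex_Analysis"
begin


lemma open_ne_pick:
  fixes W :: "complex set"
  assumes "open W" "W \<noteq> {}" "0 \<notin> W"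
  obtains w0 r where "w0 \<in> W" "r > 0" "r < norm w0" "ball w0 r \<subseteq> W"
proof -
  obtain w0 where w0: "w0 \<in> W" using assms by auto
  then obtain r where r: "r > 0" "ball w0 r \<subseteq> W" using assms open_contains_ball by blast
  have "w0 \<noteq> 0" using w0 assms by auto
  hence nw: "norm w0 > 0" by simp
  hence "min r (norm w0 / 2) > 0" "min r (norm w0 / 2) < norm w0" using r by (auto simp: min_def)
  moreover have "ball w0 (min r (norm w0 / 2)) \<subseteq> W" using r by auto
  ultimately show ?thesis using that w0 by blast
qed

lemma scale_pt:
  fixes w0 :: complex
  assumes "r > 0" "r < norm w0" "\<bar>t\<bar> < r / norm w0"
  shows "w0 * (1 + of_real t) \<in> ball w0 r" "norm (w0 * (1 + of_real t)) = norm w0 * (1 + t)"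
proof -
  have n0: "norm w0 > 0" using assms by auto
  have "\<bar>t\<bar> * norm w0 < r" using assms n0 by (simp add: field_simps)
  moreover have "dist w0 (w0 * (1 + of_real t)) = \<bar>t\<bar> * norm w0"
    by (simp add: dist_norm algebra_simps norm_mult)
  ultimately show "w0 * (1 + of_real t) \<in> ball w0 r" by simp
  have "\<bar>t\<bar> * norm w0 < 1 * norm w0" using \<open>\<bar>t\<bar> * norm w0 < r\<close> assms by simp
  hence "\<bar>t\<bar> < 1" using n0 mult_less_cancel_right_pos by blast
  hence "1 + t > 0" by linarith
  have "norm (1 + complex_of_real t) = 1 + t"
    by (metis \<open>1 + t > 0\<close> norm_of_real of_real_1 of_real_add abs_of_pos)
  thus "norm (w0 * (1 + of_real t)) = norm w0 * (1 + t)" by (simp add: norm_mult)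
qed

lemma powser_unique_open:
  fixes e :: "nat \<Rightarrow> complex"
  assumes W: "open W" "W \<noteq> {}" "0 \<notin> W"
    and s: "\<And>w. w \<in> W \<Longrightarrow> (\<lambda>i. e i * w ^ i) sums 0"
  shows "e i = 0"
proof -
  obtain w0 r where w0: "w0 \<in> W" "r > 0" "r < norm w0" "ball w0 r \<subseteq> W"
    using open_ne_pick[OF W] by blast
  define t where "t = r / (2 * norm w0)"
  have n0: "norm w0 > 0" using w0 by auto
  have t: "\<bar>t\<bar> < r / norm w0" "t > 0" using w0 n0 by (auto simp: t_def field_simps)
  define w1 where "w1 = w0 * (1 + of_real t)"
  have w1: "w1 \<in> W" "norm w1 = norm w0 * (1 + t)"
    using scale_pt[OF w0(2,3) t(1)] w0(4) by (auto simp: w1_def)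
  define F where "F = Abs_fps e"
  have "conv_radius e \<ge> norm w1"
    using s[OF w1(1)] by (intro conv_radius_geI) (auto simp: sums_iff)
  hence rad: "fps_conv_radius F \<ge> norm w1" by (simp add: F_def fps_conv_radius_def)
  define R where "R = norm w1"
  have R: "R > norm w0" using w1 n0 t by (simp add: R_def)
  have hol: "eval_fps F holomorphic_on ball 0 R"
  proof (rule holomorphic_on_eval_fps, safe)
    fix x :: complex assume "x \<in> ball 0 R"
    hence "ereal (norm x) < ereal (norm w1)" by (simp add: R_def)
    hence "ereal (norm x) < fps_conv_radius F" using rad by (rule order.strict_trans2)
    thus "x \<in> eball 0 (fps_conv_radius F)" by simp
  qed
  have z: "eval_fps F w = 0" if "w \<in> W" for w
    using s[OF that] by (simp add: eval_fps_def F_def sums_iff)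
  have U: "open (W \<inter> ball 0 R)" "w0 \<in> W \<inter> ball 0 R" using W R w0 by auto
  have lim: "w0 islimpt (W \<inter> ball 0 R)"
    using U by (intro interior_limit_point) (simp only: interior_open)
  have all0: "eval_fps F w = 0" if "w \<in> ball 0 R" for w
    by (rule analytic_continuation[OF hol open_ball connected_ball _ _ lim])
       (use U that z in auto)
  have R0: "R > 0" using R n0 by linarith
  have "eventually (\<lambda>w. eval_fps F w = eval_fps 0 w) (nhds 0)"
    using eventually_nhds_in_open[OF open_ball, of 0 0 R] R0 all0
    by (auto elim!: eventually_mono)
  moreover have "fps_conv_radius F > 0"
  proof -
    have "ereal 0 < ereal R" using R0 by simp
    thus ?thesis using rad by (simp add: R_def zero_ereal_def[symmetric] order.strict_trans2 del: ereal_less)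
  qed
  ultimately have "F = 0"
    by (intro eval_fps_eqD) auto
  thus ?thesis by (metis F_def fps_nth_Abs_fps fps_zero_nth)
qed

lemma laurent_split:
  fixes \<beta> :: "int \<Rightarrow> complex"
  assumes hs: "((\<lambda>j. \<beta> j * w powi j) has_sum s) UNIV"
  obtains sp sn where "(\<lambda>i. \<beta> (int i) * w ^ i) sums sp"
    "(\<lambda>i. (if i = 0 then 0 else \<beta> (- int i)) * inverse w ^ i) sums sn"
    "s = sp + sn"
proof -
  define q where "q = (\<lambda>i::nat. if i = 0 then 0 else \<beta> (- int i))"
  define f where "f = (\<lambda>j. \<beta> j * w powi j)"
  have sm: "f summable_on UNIV" using hs by (auto simp: f_def intro: has_sum_imp_summable)
  have s1: "f summable_on {0..}" and s2: "f summable_on {..<0}"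
    using sm by (auto intro: summable_on_subset_banach)
  define sp where "sp = infsum f {0..}"
  define sn where "sn = infsum f {..<0}"
  have "(f has_sum (sp + sn)) ({0..} \<union> {..<0})"
    using s1 s2 unfolding sp_def sn_def by (intro has_sum_Un_disjoint) (auto intro: has_sum_infsum)
  moreover have "{0::int..} \<union> {..<0} = UNIV" by auto
  ultimately have "(f has_sum (sp + sn)) UNIV" by simp
  moreover have "(f has_sum s) UNIV" using hs by (simp add: f_def)
  ultimately have "s = sp + sn" by (rule has_sum_unique[symmetric])
  have "(f has_sum sp) {0..}" using s1 by (simp add: sp_def has_sum_infsum)
  moreover have "(f has_sum sp) {0..} \<longleftrightarrow> ((\<lambda>i. \<beta> (int i) * w ^ i) has_sum sp) UNIV"
    by (rule has_sum_reindex_bij_witness[where i=int and j=nat]) (simp_all add: f_def power_int_def)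
  ultimately have A: "(\<lambda>i. \<beta> (int i) * w ^ i) sums sp" by (simp add: has_sum_imp_sums)
  have "(f has_sum sn) {..<0}" using s2 by (simp add: sn_def has_sum_infsum)
  moreover have "(f has_sum sn) {..<0} \<longleftrightarrow> ((\<lambda>i. q i * inverse w ^ i) has_sum sn) {1..}"
    by (rule has_sum_reindex_bij_witness[where i="\<lambda>k. - int k" and j="\<lambda>k. nat (- k)"])
       (simp_all add: f_def q_def power_int_def power_inverse)
  moreover have "((\<lambda>i. q i * inverse w ^ i) has_sum sn) {1..} \<longleftrightarrow> ((\<lambda>i. q i * inverse w ^ i) has_sum sn) UNIV"
    by (rule has_sum_cong_neutral) (auto simp: q_def)
  ultimately have B: "(\<lambda>i. q i * inverse w ^ i) sums sn" by (simp add: has_sum_imp_sums)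
  show ?thesis by (rule that[OF A B[unfolded q_def] \<open>s = sp + sn\<close>])
qed

lemma rad_ge: "summable (\<lambda>i. c i * z ^ i) \<Longrightarrow> fps_conv_radius (Abs_fps c) \<ge> ereal (norm (z::complex))"
  by (simp add: fps_conv_radius_def conv_radius_geI)

lemma in_eball_rad: "fps_conv_radius F \<ge> ereal R \<Longrightarrow> norm (x::complex) < R \<Longrightarrow> x \<in> eball 0 (fps_conv_radius F)"
proof -
  assume a: "fps_conv_radius F \<ge> ereal R" "norm x < R"
  hence "ereal (norm x) < ereal R" by simp
  hence "ereal (norm x) < fps_conv_radius F" using a(1) by (rule order.strict_trans2)
  thus ?thesis by simp
qed

lemma fps_zero_on_ball:
  fixes F :: "complex fps"
  assumes "fps_conv_radius F \<ge> ereal R" "R > 0" "\<And>x. norm x < R \<Longrightarrow> eval_fps F x = 0"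
  shows "F = 0"
proof -
  have "eventually (\<lambda>w. eval_fps F w = eval_fps 0 w) (nhds 0)"
    using eventually_nhds_in_open[OF open_ball, of 0 0 R] assms
    by (auto elim!: eventually_mono)
  moreover have "fps_conv_radius F > 0"
  proof -
    have "ereal 0 < ereal R" using assms by simp
    thus ?thesis using assms(1) by (simp add: zero_ereal_def[symmetric] order.strict_trans2 del: ereal_less)
  qed
  ultimately show "F = 0" by (intro eval_fps_eqD) auto
qed

lemma laurent_unique_1:
  fixes \<beta> :: "int \<Rightarrow> complex"
  assumes W: "open W" "W \<noteq> {}" "0 \<notin> W"
    and hs: "\<And>w. w \<in> W \<Longrightarrow> ((\<lambda>j. \<beta> j * w powi j) has_sum 0) UNIV"
  shows "\<beta> j = 0"
proof -
  obtain w0 r where w0: "w0 \<in> W" "r > 0" "r < norm w0" "ball w0 r \<subseteq> W"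
    using open_ne_pick[OF W] by blast
  define t where "t = r / (2 * norm w0)"
  have n0: "norm w0 > 0" using w0 by auto
  have t: "\<bar>t\<bar> < r / norm w0" "\<bar>-t\<bar> < r / norm w0" "t > 0" "t < 1"
    using w0 n0 by (auto simp: t_def field_simps)
  define w1 where "w1 = w0 * (1 + of_real t)"
  define w2 where "w2 = w0 * (1 + of_real (-t))"
  have w1: "w1 \<in> W" "norm w1 = norm w0 * (1 + t)"
    using scale_pt[OF w0(2,3) t(1)] w0(4) by (auto simp: w1_def)
  have w2: "w2 \<in> W" "norm w2 = norm w0 * (1 - t)"
    using scale_pt[OF w0(2,3) t(2)] w0(4) by (auto simp: w2_def)
  define R1 where "R1 = norm w0 * (1 + t)"
  define r0 where "r0 = norm w0 * (1 - t)"
  have rr: "0 < r0" "r0 < norm w0" "norm w0 < R1" using t n0 by (auto simp: r0_def R1_def)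
  define q where "q = (\<lambda>i::nat. if i = 0 then 0 else \<beta> (- int i))"
  define p where "p = (\<lambda>i::nat. \<beta> (int i))"
  define P where "P = eval_fps (Abs_fps p)"
  define N where "N = eval_fps (Abs_fps q)"
  have key: "P w + N (inverse w) = 0" if wW: "w \<in> W" for w
  proof -
    obtain sp sn where A: "(\<lambda>i. \<beta> (int i) * w ^ i) sums sp" and B: "(\<lambda>i. q i * inverse w ^ i) sums sn"
      and C: "0 = sp + sn"
      using laurent_split[OF hs[OF wW]] unfolding q_def by blast
    have "P w = sp" using A by (simp add: P_def eval_fps_def p_def sums_iff)
    moreover have "N (inverse w) = sn" using B by (simp add: N_def eval_fps_def sums_iff)
    ultimately show ?thesis using C by simp
  qed
  have radP: "fps_conv_radius (Abs_fps p) \<ge> ereal R1"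
  proof -
    obtain sp sn where A: "(\<lambda>i. \<beta> (int i) * w1 ^ i) sums sp"
      using laurent_split[OF hs[OF w1(1)]] by blast
    show ?thesis using rad_ge[of p w1] A w1 by (auto simp: p_def sums_iff R1_def)
  qed
  have radN: "fps_conv_radius (Abs_fps q) \<ge> ereal (1 / r0)"
  proof -
    obtain sp sn where B: "(\<lambda>i. q i * inverse w2 ^ i) sums sn"
      using laurent_split[OF hs[OF w2(1)]] unfolding q_def by blast
    have "norm (inverse w2) = 1 / r0" using w2 by (simp add: r0_def norm_inverse divide_inverse)
    thus ?thesis using rad_ge[of q "inverse w2"] B by (auto simp: sums_iff)
  qed
  have holP: "P holomorphic_on ball 0 R1"
    unfolding P_def by (rule holomorphic_on_eval_fps) (use radP in \<open>auto intro: in_eball_rad\<close>)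
  have holN: "N holomorphic_on ball 0 (1 / r0)"
    unfolding N_def by (rule holomorphic_on_eval_fps) (use radN in \<open>auto intro: in_eball_rad\<close>)
  define A where "A = {w::complex. r0 < norm (w - 0) \<and> norm (w - 0) < R1}"
  have Aeq: "A = ball 0 R1 - cball 0 r0" by (auto simp: A_def)
  have openA: "open A" by (simp add: Aeq open_Diff)
  have connA: "connected A" unfolding A_def by (rule connected_annulus) simp
  have invA: "inverse ` A \<subseteq> ball 0 (1 / r0)"
  proof
    fix u assume "u \<in> inverse ` A"
    then obtain w where w: "w \<in> A" "u = inverse w" by auto
    have "norm w > r0" using w by (auto simp: A_def)
    hence "1 / norm w < 1 / r0" using rr by (intro divide_strict_left_mono mult_pos_pos) auto
    thus "u \<in> ball 0 (1 / r0)" using w by (simp add: norm_inverse divide_inverse)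
  qed
  have holF: "(\<lambda>w. P w + N (inverse w)) holomorphic_on A"
  proof (intro holomorphic_on_add)
    show "P holomorphic_on A" using holP by (rule holomorphic_on_subset) (auto simp: A_def)
    have "inverse holomorphic_on A" using rr by (intro holomorphic_intros) (auto simp: A_def)
    hence "(N \<circ> inverse) holomorphic_on A" using holN invA by (rule holomorphic_on_compose_gen)
    thus "(\<lambda>w. N (inverse w)) holomorphic_on A" by (simp add: o_def)
  qed
  have U: "open (W \<inter> A)" "w0 \<in> W \<inter> A" using W openA w0 rr by (auto simp: A_def)
  have lim: "w0 islimpt (W \<inter> A)"
    using U by (intro interior_limit_point) (simp only: interior_open)
  have F0: "P w + N (inverse w) = 0" if "w \<in> A" for w
    by (rule analytic_continuation[OF holF openA connA _ _ lim, of w])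
       (use U that key in auto)
  define G where "G = (\<lambda>w. if norm w < R1 then P w else - N (inverse w))"
  have holG: "G holomorphic_on UNIV"
  proof -
    have "G holomorphic_on ball 0 R1"
      by (rule holomorphic_transform[OF holP]) (simp add: G_def)
    moreover have "G holomorphic_on (- cball 0 r0)"
    proof (rule holomorphic_transform)
      have "inverse holomorphic_on (- cball (0::complex) r0)" using rr by (intro holomorphic_intros) auto
      moreover have "inverse ` (- cball (0::complex) r0) \<subseteq> ball 0 (1 / r0)"
      proof
        fix u :: complex assume "u \<in> inverse ` (- cball (0::complex) r0)"
        then obtain w :: complex where w0': "w \<in> - cball 0 r0" "u = inverse w" by blast
        hence w: "norm w > r0" "u = inverse w" by auto
        hence "1 / norm w < 1 / r0" using rr by (intro divide_strict_left_mono mult_pos_pos) auto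
        thus "u \<in> ball 0 (1 / r0)" using w by (simp add: norm_inverse divide_inverse)
      qed
      ultimately have "(N \<circ> inverse) holomorphic_on (- cball 0 r0)" using holN
        by (intro holomorphic_on_compose_gen)
      thus "(\<lambda>w. - N (inverse w)) holomorphic_on (- cball 0 r0)"
        by (intro holomorphic_intros) (simp add: o_def)
    next
      fix w :: complex assume "w \<in> - cball 0 r0"
      thus "- N (inverse w) = G w" using F0[of w] by (auto simp: G_def A_def add_eq_0_iff)
    qed
    ultimately have "G holomorphic_on (ball 0 R1 \<union> - cball 0 r0)"
      by (intro holomorphic_on_Un) auto
    moreover have "ball 0 R1 \<union> - cball 0 r0 = UNIV" using rr by auto
    ultimately show ?thesis by metis
  qed
  have Nc: "isCont N 0"
  proof -
    have "continuous_on (ball 0 (1 / r0)) N" using holN by (rule holomorphic_on_imp_continuous_on)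
    thus ?thesis using rr by (simp add: continuous_on_eq_continuous_at)
  qed
  have N00: "N 0 = 0" by (simp add: N_def eval_fps_at_0 q_def)
  have limG: "(G \<longlongrightarrow> 0) at_infinity"
  proof -
    have "((\<lambda>w. N (inverse w)) \<longlongrightarrow> N 0) at_infinity"
      by (rule isCont_tendsto_compose[OF Nc tendsto_inverse_0])
    hence "((\<lambda>w. - N (inverse w)) \<longlongrightarrow> 0) at_infinity"
      using N00 tendsto_minus by fastforce
    moreover have "eventually (\<lambda>w. - N (inverse w) = G w) at_infinity"
      unfolding eventually_at_infinity by (rule exI[of _ R1]) (auto simp: G_def)
    ultimately show ?thesis by (rule Lim_transform_eventually)
  qed
  have G0: "G w = 0" for w using Liouville_weak_0[OF holG limG] .
  have "Abs_fps p = 0"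
  proof (rule fps_zero_on_ball[OF radP])
    show "R1 > 0" using rr by linarith
    fix x :: complex assume "norm x < R1"
    thus "eval_fps (Abs_fps p) x = 0" using G0[of x] by (simp add: G_def P_def)
  qed
  hence p0: "p i = 0" for i by (metis fps_nth_Abs_fps fps_zero_nth)
  have "Abs_fps q = 0"
  proof (rule fps_zero_on_ball[OF radN])
    show "1 / r0 > 0" using rr by simp
    fix u :: complex assume u: "norm u < 1 / r0"
    show "eval_fps (Abs_fps q) u = 0"
    proof (cases "u = 0")
      case True thus ?thesis using N00 by (simp add: N_def)
    next
      case False
      define w where "w = inverse u"
      have nw: "norm w = 1 / norm u" by (simp add: w_def norm_inverse divide_inverse)
      have "norm u > 0" using False by simp
      hence "norm w > r0" using u rr unfolding nw by (simp add: field_simps)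
      have uw: "u = inverse w" by (simp add: w_def)
      show ?thesis
      proof (cases "norm w < R1")
        case True
        hence "w \<in> A" using \<open>norm w > r0\<close> by (simp add: A_def)
        moreover have "P w = 0" using G0[of w] True by (simp add: G_def)
        ultimately show ?thesis using F0[of w] uw by (simp add: N_def)
      next
        case False
        thus ?thesis using G0[of w] uw by (simp add: G_def N_def)
      qed
    qed
  qed
  hence q0: "q i = 0" for i by (metis fps_nth_Abs_fps fps_zero_nth)
  show ?thesis
  proof (cases "j \<ge> 0")
    case True thus ?thesis using p0[of "nat j"] by (simp add: p_def)
  next
    case False thus ?thesis using q0[of "nat (- j)"] by (simp add: q_def)
  qed
qed



lemma lmono_upd:
  "lmono (Suc m) (k'(m := j)) (z(m := w)) = lmono m k' z * w powi j"
proof -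
  have "(\<Prod>i<m. (z(m := w)) i powi (k'(m := j)) i) = (\<Prod>i<m. z i powi k' i)"
    by (rule prod.cong) auto
  thus ?thesis by (simp add: lmono_def)
qed

lemma idx_Suc_split: "k \<in> idx (Suc m) \<Longrightarrow> k(m := 0) \<in> idx m \<and> k = (k(m := 0))(m := k m)"
  by (auto simp: idx_def)

lemma idx_upd: "k' \<in> idx m \<Longrightarrow> k'(m := j) \<in> idx (Suc m)"
  by (auto simp: idx_def)

lemma fubini_last:
  fixes b :: "(nat \<Rightarrow> int) \<Rightarrow> complex"
  assumes hs: "((\<lambda>k. b k * lmono (Suc m) k (z(m := w))) has_sum s) (idx (Suc m))" and w: "w \<noteq> 0"
  shows "(\<lambda>k'. b (k'(m := j)) * lmono m k' z) summable_on idx m"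
    and "((\<lambda>j. infsum (\<lambda>k'. b (k'(m := j)) * lmono m k' z) (idx m) * w powi j) has_sum s) UNIV"
proof -
  define g where "g = (\<lambda>(j, k'). b (k'(m := j)) * lmono m k' z * w powi j)"
  have "(g has_sum s) (Sigma UNIV (\<lambda>_. idx m))"
  proof -
    have "(g has_sum s) (Sigma UNIV (\<lambda>_. idx m)) = ((\<lambda>k. b k * lmono (Suc m) k (z(m := w))) has_sum s) (idx (Suc m))"
    proof (rule has_sum_reindex_bij_witness[where j="\<lambda>(j, k'). k'(m := j)" and i="\<lambda>k. (k m, k(m := 0))"])
      fix a :: "int \<times> (nat \<Rightarrow> int)" assume a: "a \<in> Sigma UNIV (\<lambda>_. idx m)"
      obtain j k' where ajk: "a = (j, k')" by (cases a)
      have k': "k' m = 0" "k' \<in> idx m" using a ajk by (auto simp: idx_def)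
      show "(\<lambda>k. (k m, k(m := 0))) (case a of (j, k') \<Rightarrow> k'(m := j)) = a"
        using k' ajk by (auto simp: fun_eq_iff)
      show "(case a of (j, k') \<Rightarrow> k'(m := j)) \<in> idx (Suc m)" using k' ajk idx_upd by simp
      show "b ((case a of (j, k') \<Rightarrow> k'(m := j))) * lmono (Suc m) (case a of (j, k') \<Rightarrow> k'(m := j)) (z(m := w)) = g a"
        using ajk by (simp add: g_def lmono_upd)
    next
      fix k assume k: "k \<in> idx (Suc m)"
      show "(case (k m, k(m := 0)) of (j, k') \<Rightarrow> k'(m := j)) = k" by (simp add: fun_eq_iff)
      show "(k m, k(m := 0)) \<in> Sigma UNIV (\<lambda>_. idx m)" using idx_Suc_split[OF k] by simp
    qed simp
    thus ?thesis using hs by simp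
  qed
  note G = this
  have gs: "(\<lambda>k'. g (j, k')) summable_on idx m" for j
  proof -
    have "(\<lambda>(x, y). g (x, y)) summable_on Sigma UNIV (\<lambda>_. idx m)"
      using G by (simp add: has_sum_imp_summable)
    thus ?thesis by (rule summable_on_SigmaD1[where f="\<lambda>x y. g (x, y)"]) simp
  qed
  have eq: "g (j, k') * inverse (w powi j) = b (k'(m := j)) * lmono m k' z" for j k'
    using w by (simp add: g_def)
  show S: "(\<lambda>k'. b (k'(m := j)) * lmono m k' z) summable_on idx m" for j
    using summable_on_cmult_left[OF gs[of j], of "inverse (w powi j)"] eq by simp
  have "((\<lambda>k'. g (j, k')) has_sum (infsum (\<lambda>k'. b (k'(m := j)) * lmono m k' z) (idx m) * w powi j)) (idx m)" for j
  proof -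
    have "((\<lambda>k'. b (k'(m := j)) * lmono m k' z * w powi j) has_sum (infsum (\<lambda>k'. b (k'(m := j)) * lmono m k' z) (idx m) * w powi j)) (idx m)"
      by (intro has_sum_cmult_left has_sum_infsum S)
    thus ?thesis by (simp add: g_def)
  qed
  thus "((\<lambda>j. infsum (\<lambda>k'. b (k'(m := j)) * lmono m k' z) (idx m) * w powi j) has_sum s) UNIV"
    by (rule has_sum_SigmaD[OF G])
qed

lemma laurent_unique:
  fixes b :: "(nat \<Rightarrow> int) \<Rightarrow> complex"
  assumes "\<forall>i<m. open (X i) \<and> X i \<noteq> {} \<and> 0 \<notin> X i"
    and "\<forall>z. (\<forall>i<m. z i \<in> X i) \<longrightarrow> ((\<lambda>k. b k * lmono m k z) has_sum 0) (idx m)"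
    and "k \<in> idx m"
  shows "b k = 0"
  using assms
proof (induction m arbitrary: b k)
  case 0
  have I: "idx 0 = {\<lambda>_. 0}" by (auto simp: idx_def)
  hence k: "k = (\<lambda>_. 0)" using 0 by auto
  have "((\<lambda>k. b k * lmono 0 k (\<lambda>_. 0)) has_sum 0) {\<lambda>_. 0}" using 0 I by auto
  moreover have "((\<lambda>k. b k * lmono 0 k (\<lambda>_. 0)) has_sum (b (\<lambda>_. 0))) {\<lambda>_. 0}"
    by (rule has_sum_finiteI) (auto simp: lmono_def)
  ultimately show ?case using k has_sum_unique by blast
next
  case (Suc m)
  have Xm: "open (X m)" "X m \<noteq> {}" "0 \<notin> X m" using Suc.prems(1) by auto
  obtain w0 where w0: "w0 \<in> X m" using Xm by auto
  define j where "j = k m"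
  define k' where "k' = k(m := 0)"
  have k': "k' \<in> idx m" "k = k'(m := j)" using idx_Suc_split[OF Suc.prems(3)] by (auto simp: k'_def j_def)
  have P1: "\<forall>i<m. open (X i) \<and> X i \<noteq> {} \<and> 0 \<notin> X i" using Suc.prems(1) by auto
  have P2: "\<forall>z. (\<forall>i<m. z i \<in> X i) \<longrightarrow> ((\<lambda>k. b (k(m := j)) * lmono m k z) has_sum 0) (idx m)"
    proof (intro allI impI)
      fix z :: "nat \<Rightarrow> complex" assume z: "\<forall>i<m. z i \<in> X i"
      have hz: "((\<lambda>k. b k * lmono (Suc m) k (z(m := w))) has_sum 0) (idx (Suc m))" if "w \<in> X m" for w
      proof -
        have "\<forall>i<Suc m. (z(m := w)) i \<in> X i" using z that by (simp add: less_Suc_eq)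
        thus ?thesis using Suc.prems(2) by blast
      qed
      define \<beta> where "\<beta> = (\<lambda>j. infsum (\<lambda>k'. b (k'(m := j)) * lmono m k' z) (idx m))"
      have "\<beta> j = 0"
      proof (rule laurent_unique_1[OF Xm])
        fix w assume w: "w \<in> X m"
        hence "w \<noteq> 0" using Xm by auto
        thus "((\<lambda>j. \<beta> j * w powi j) has_sum 0) UNIV"
          using fubini_last(2)[OF hz[OF w]] by (simp add: \<beta>_def)
      qed
      moreover have "(\<lambda>k'. b (k'(m := j)) * lmono m k' z) summable_on idx m"
        using fubini_last(1)[OF hz[OF w0]] w0 Xm by blast
      ultimately show "((\<lambda>k. b (k(m := j)) * lmono m k z) has_sum 0) (idx m)"
        using has_sum_infsum[of "\<lambda>k'. b (k'(m := j)) * lmono m k' z" "idx m"] unfolding \<beta>_def by simp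
    qed
  have "(\<lambda>k'. b (k'(m := j))) k' = 0" by (rule Suc.IH[OF P1 P2 k'(1)])
  thus ?case using k'(2) by (simp only:)
qed


lemma sum_icc_eq:
  fixes u :: "int \<Rightarrow> complex"
  assumes "\<forall>j<a. u j = 0" "\<forall>j<b. u j = 0"
  shows "sum u {a..n} = sum u {b..n}"
proof -
  have "sum u {a..n} = sum u {min a b..n}"
    by (rule sum.mono_neutral_left) (use assms in auto)
  moreover have "sum u {b..n} = sum u {min a b..n}"
    by (rule sum.mono_neutral_left) (use assms in auto)
  ultimately show ?thesis by simp
qed

lemma partial_to_sums:
  fixes u :: "int \<Rightarrow> complex" and M :: nat
  assumes lim: "(\<lambda>N::nat. \<Sum>j\<in>{-K..int N}. u j) \<longlonglongrightarrow> s"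
    and z1: "\<forall>j < -K. u j = 0" and z2: "\<forall>j < - int M. u j = 0"
  shows "(\<lambda>i. u (int i - int M)) sums s"
proof -
  have eq: "(\<Sum>i<n + (M + 1). u (int i - int M)) = (\<Sum>j\<in>{-K..int n}. u j)" for n
  proof -
    have "(\<Sum>i<n + (M + 1). u (int i - int M)) = (\<Sum>j\<in>{- int M..int n}. u j)"
      by (rule sum.reindex_bij_witness[where j="\<lambda>i. int i - int M" and i="\<lambda>j. nat (j + int M)"]) auto
    also have "\<dots> = (\<Sum>j\<in>{-K..int n}. u j)" by (rule sum_icc_eq) (use z1 z2 in auto)
    finally show ?thesis .
  qed
  have "(\<lambda>n. \<Sum>i<n + (M + 1). u (int i - int M)) \<longlonglongrightarrow> s" unfolding eq by (rule lim)
  hence "(\<lambda>n. \<Sum>i<n. u (int i - int M)) \<longlonglongrightarrow> s" by (rule LIMSEQ_offset)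
  thus ?thesis by (simp add: sums_def)
qed

lemma has_sum_to_sums:
  fixes u :: "int \<Rightarrow> complex" and M :: nat
  assumes hs: "(u has_sum s) UNIV" and z: "\<forall>j < - int M. u j = 0"
  shows "(\<lambda>i. u (int i - int M)) sums s"
proof -
  have "(u has_sum s) {- int M..}"
    using hs by (subst has_sum_cong_neutral[where g=u and T=UNIV]) (use z in auto)
  moreover have "(u has_sum s) {- int M..} \<longleftrightarrow> ((\<lambda>i. u (int i - int M)) has_sum s) UNIV"
    by (rule has_sum_reindex_bij_witness[where j="\<lambda>j. nat (j + int M)" and i="\<lambda>i. int i - int M"]) auto
  ultimately show ?thesis by (simp add: has_sum_imp_sums)
qed

lemma coeff_match:
  fixes g h :: "int \<Rightarrow> complex" and F :: "complex \<Rightarrow> complex" and KK PP :: int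
  assumes W: "open W" "W \<noteq> {}" "0 \<notin> W"
    and gKK: "\<forall>j < -KK. g j = 0" and hPP: "\<forall>j < -PP. h j = 0"
    and gconv: "\<forall>w\<in>W. \<exists>K. (\<forall>j < -K. g j = 0) \<and> (\<lambda>N::nat. \<Sum>j\<in>{-K..int N}. g j * w powi j) \<longlonglongrightarrow> F w"
    and hconv: "\<forall>w\<in>W. ((\<lambda>j. h j * w powi j) has_sum F w) UNIV"
  shows "g j = h j"
proof -
  define M where "M = nat (max (max KK PP) 0)"
  have gM: "\<forall>j < - int M. g j = 0" and hM: "\<forall>j < - int M. h j = 0"
    using gKK hPP by (auto simp: M_def)
  have e0: "g (int i - int M) - h (int i - int M) = 0" for i
  proof (rule powser_unique_open[OF W, where e="\<lambda>i. g (int i - int M) - h (int i - int M)"])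
    fix w assume w: "w \<in> W"
    hence w0: "w \<noteq> 0" using W by auto
    obtain K where K: "\<forall>j < -K. g j = 0" "(\<lambda>N::nat. \<Sum>j\<in>{-K..int N}. g j * w powi j) \<longlonglongrightarrow> F w"
      using gconv w by blast
    have A: "(\<lambda>i. g (int i - int M) * w powi (int i - int M)) sums F w"
      using partial_to_sums[where u="\<lambda>j. g j * w powi j", OF K(2)] K(1) gM by simp
    have B: "(\<lambda>i. h (int i - int M) * w powi (int i - int M)) sums F w"
      using has_sum_to_sums[where u="\<lambda>j. h j * w powi j", OF hconv[rule_format, OF w]] hM by simp
    have "(\<lambda>i. (g (int i - int M) * w powi (int i - int M) - h (int i - int M) * w powi (int i - int M)) * w ^ M) sums ((F w - F w) * w ^ M)"
      by (intro sums_mult2 sums_diff A B)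
    moreover have pw: "w powi (int i - int M) * w ^ M = w ^ i" for i
      using w0 by (simp add: power_int_diff field_simps)
    have "(\<lambda>i. (g (int i - int M) * w powi (int i - int M) - h (int i - int M) * w powi (int i - int M)) * w ^ M)
        = (\<lambda>i. (g (int i - int M) - h (int i - int M)) * w ^ i)"
    proof
      fix i
      have "(g (int i - int M) * w powi (int i - int M) - h (int i - int M) * w powi (int i - int M)) * w ^ M
          = (g (int i - int M) - h (int i - int M)) * (w powi (int i - int M) * w ^ M)"
        by (simp add: algebra_simps)
      thus "(g (int i - int M) * w powi (int i - int M) - h (int i - int M) * w powi (int i - int M)) * w ^ M
          = (g (int i - int M) - h (int i - int M)) * w ^ i" by (simp only: pw)
    qed
    ultimately show "(\<lambda>i. (g (int i - int M) - h (int i - int M)) * w ^ i) sums 0"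
      by simp
  qed
  show ?thesis
  proof (cases "j < - int M")
    case True thus ?thesis using gM hM by simp
  next
    case False
    hence "j = int (nat (j + int M)) - int M" by simp
    thus ?thesis using e0[of "nat (j + int M)"] by (metis eq_iff_diff_eq_0)
  qed
qed

lemma box_in_open:
  assumes "openin (top_of_set (Cn n)) S" "z0 \<in> S"
  obtains X where "\<forall>i. open (X i)" "\<forall>i. z0 i \<in> X i" "\<forall>z\<in>Cn n. (\<forall>i<n. z i \<in> X i) \<longrightarrow> z \<in> S"
proof -
  obtain Ob where Ob: "open Ob" "S = Cn n \<inter> Ob" using assms(1) by (auto simp: openin_open)
  have "openin (product_topology (\<lambda>i. euclidean) UNIV) Ob" using Ob(1) by (simp add: open_fun_def)
  from product_topology_open_contains_basis[OF this, of z0] assms(2) Ob(2)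
  obtain X where X: "z0 \<in> (\<Pi>\<^sub>E i\<in>UNIV. X i)" "\<forall>i. openin euclidean (X i)" "(\<Pi>\<^sub>E i\<in>UNIV. X i) \<subseteq> Ob"
    by auto
  have z0C: "z0 \<in> Cn n" using assms(2) Ob(2) by auto
  show ?thesis
  proof (rule that)
    show "\<forall>i. open (X i)" using X(2) by simp
    show "\<forall>i. z0 i \<in> X i" using X(1) by auto
    show "\<forall>z\<in>Cn n. (\<forall>i<n. z i \<in> X i) \<longrightarrow> z \<in> S"
    proof (intro ballI impI)
      fix z assume z: "z \<in> Cn n" "\<forall>i<n. z i \<in> X i"
      have "z i \<in> X i" for i
      proof (cases "i < n")
        case True thus ?thesis using z by auto
      next
        case False
        hence "z i = 0" "z0 i = 0" using z(1) z0C by (auto simp: Cn_def)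
        thus ?thesis using X(1) by (metis PiE_iff UNIV_I)
      qed
      hence "z \<in> (\<Pi>\<^sub>E i\<in>UNIV. X i)" by auto
      thus "z \<in> S" using X(3) z(1) Ob(2) by auto
    qed
  qed
qed

lemma open_minus_zero_ne:
  fixes X :: "complex set"
  assumes "open X" "x \<in> X"
  shows "X - {0} \<noteq> {}"
proof
  assume "X - {0} = {}"
  hence "X = {0}" using assms by auto
  thus False using assms(1) not_open_singleton by metis
qed

theorem mainTheorem3:
  fixes n :: nat
    and P Q :: "(nat \<Rightarrow> nat) \<Rightarrow> complex"
    and f :: "(nat \<Rightarrow> complex) \<Rightarrow> complex"
    and T S :: "(nat \<Rightarrow> complex) set"
    and a :: "(nat \<Rightarrow> int) \<Rightarrow> complex"
  assumes n: "n \<ge> 1"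
    and P: "is_mpoly n P" and Q: "is_mpoly n Q" and Qnz: "\<exists>\<alpha>. Q \<alpha> \<noteq> 0"
    and T: "domain_in n T" "multicircular n T"
    and holo: "holo_on n f T"
    and rat: "\<forall>z\<in>T. mpoly_eval n Q z \<noteq> 0 \<longrightarrow> f z = mpoly_eval n P z / mpoly_eval n Q z"
    and lowest: "\<exists>c. (\<forall>z\<in>T. laurent_abs_conv_to n c z (f z)) \<and>
        (\<exists>k\<in>idx n. c k \<noteq> 0 \<and> k (n - 1) = - int (pole_order_zn n P Q)) \<and>
        (\<forall>k\<in>idx n. c k \<noteq> 0 \<longrightarrow> - int (pole_order_zn n P Q) \<le> k (n - 1))"
    and S: "S \<noteq> {}" "S \<subseteq> T" "openin (top_of_set (Cn n)) S"
    and inner: "\<forall>kn::int. \<forall>z'\<in>proj_last n ` S.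
        \<exists>s. laurent_abs_conv_to (n - 1) (\<lambda>k'. a (k'(n - 1 := kn))) z' s"
    and outer: "\<forall>z\<in>S.
        finite {kn::int. kn < 0 \<and> inner_sum n a kn (proj_last n z) \<noteq> 0} \<and>
        (\<forall>kn::int. kn < 0 \<and> inner_sum n a kn (proj_last n z) \<noteq> 0 \<longrightarrow> z (n - 1) \<noteq> 0) \<and>
        (\<exists>K::int. (\<forall>kn. kn < - K \<longrightarrow> inner_sum n a kn (proj_last n z) = 0) \<and>
           ((\<lambda>N::nat. \<Sum>kn\<in>{- K..int N}. inner_sum n a kn (proj_last n z) * z (n - 1) powi kn)
              \<longlonglongrightarrow> f z))"
  shows "\<forall>z\<in>T. laurent_abs_conv_to n a z (f z)"
proof -
  obtain c where c1: "\<forall>z\<in>T. laurent_abs_conv_to n c z (f z)"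
    and c3: "\<forall>k\<in>idx n. c k \<noteq> 0 \<longrightarrow> - int (pole_order_zn n P Q) \<le> k (n - 1)"
    using lowest by blast
  define pp where "pp = pole_order_zn n P Q"
  obtain m where nm: "n = Suc m" using n by (cases n) auto
  have nm1: "n - 1 = m" using nm by simp
  obtain z0 where z0: "z0 \<in> S" using S(1) by auto
  obtain X where X: "\<forall>i. open (X i)" "\<forall>i. z0 i \<in> X i" "\<forall>z\<in>Cn n. (\<forall>i<n. z i \<in> X i) \<longrightarrow> z \<in> S"
    using box_in_open[OF S(3) z0] by blast
  define Y where "Y = (\<lambda>i. X i - {0})"
  have Y: "open (Y i)" "Y i \<noteq> {}" "0 \<notin> Y i" for i
    using X open_minus_zero_ne[of "X i" "z0 i"] by (auto simp: Y_def intro: open_Diff)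
  have inS: "z \<in> S" if "z \<in> Cn n" "\<forall>i<n. z i \<in> Y i" for z
    using X(3) that by (auto simp: Y_def)
  obtain wY where wY: "wY \<in> Y m" using Y(2) by blast
  have main: "((\<lambda>k'. a (k'(m := kn)) * lmono m k' z) has_sum inner_sum n a kn z) (idx m) \<and>
              ((\<lambda>k'. c (k'(m := kn)) * lmono m k' z) has_sum inner_sum n c kn z) (idx m) \<and>
              inner_sum n a kn z = inner_sum n c kn z"
    if z: "z \<in> Cn m" "\<forall>i<m. z i \<in> Y i" for z kn
  proof -
    have ptS: "z(m := w) \<in> S" if "w \<in> Y m" for w
    proof (rule inS)
      show "z(m := w) \<in> Cn n" using z(1) by (auto simp: Cn_def nm)
      show "\<forall>i<n. (z(m := w)) i \<in> Y i" using z(2) that by (auto simp: nm less_Suc_eq)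
    qed
    have zm: "z m = 0" using z(1) by (simp add: Cn_def)
    have proj: "proj_last n (z(m := w)) = z" for w
      using zm by (auto simp: proj_last_def nm fun_eq_iff)
    have ptT: "z(m := w) \<in> T" if "w \<in> Y m" for w using ptS[OF that] S(2) by auto
    have cT: "((\<lambda>k. c k * lmono (Suc m) k (z(m := w))) has_sum f (z(m := w))) (idx (Suc m))"
      if "w \<in> Y m" for w
      using c1 ptT[OF that] by (auto simp: laurent_abs_conv_to_def nm)
    have HA: "((\<lambda>k'. a (k'(m := j)) * lmono m k' z) has_sum inner_sum n a j z) (idx m)" for j
    proof -
      have "z \<in> proj_last n ` S" using proj[of wY] ptS[OF wY] by (metis image_eqI)
      then obtain s where "laurent_abs_conv_to (n - 1) (\<lambda>k'. a (k'(n - 1 := j))) z s"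
        using inner by blast
      hence "((\<lambda>k'. a (k'(m := j)) * lmono m k' z) has_sum s) (idx m)"
        by (simp add: laurent_abs_conv_to_def nm)
      moreover have "inner_sum n a j z = infsum (\<lambda>k'. a (k'(m := j)) * lmono m k' z) (idx m)"
        by (simp add: inner_sum_def nm)
      ultimately show ?thesis by (simp add: infsumI)
    qed
    have HB: "((\<lambda>k'. c (k'(m := j)) * lmono m k' z) has_sum inner_sum n c j z) (idx m)" for j
    proof -
      have "wY \<noteq> 0" using wY Y(3) by metis
      hence "(\<lambda>k'. c (k'(m := j)) * lmono m k' z) summable_on idx m"
        using fubini_last(1)[OF cT[OF wY]] by blast
      thus ?thesis by (simp add: inner_sum_def nm has_sum_infsum)
    qed
    obtain K0 where K0: "\<forall>kn. kn < - K0 \<longrightarrow> inner_sum n a kn (proj_last n (z(m := wY))) = 0"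
      using outer ptS[OF wY] by blast
    have HC: "inner_sum n a j z = inner_sum n c j z" for j
    proof (rule coeff_match[OF Y(1) Y(2) Y(3), where F="\<lambda>w. f (z(m := w))" and KK=K0 and PP="int pp"])
      show "\<forall>j < -K0. inner_sum n a j z = 0" using K0 proj by simp
      show "\<forall>j < - int pp. inner_sum n c j z = 0"
      proof (intro allI impI)
        fix j assume j: "j < - int pp"
        have "c (k'(m := j)) = 0" if "k' \<in> idx m" for k'
        proof -
          have "k'(m := j) \<in> idx n" using idx_upd[OF that] nm by simp
          moreover have "(k'(m := j)) (n - 1) = j" by (simp add: nm)
          ultimately show ?thesis using c3 j unfolding pp_def by fastforce
        qed
        thus "inner_sum n c j z = 0" unfolding inner_sum_def using nm by (simp add: infsum_0)
      qed
      show "\<forall>w\<in>Y m. \<exists>K. (\<forall>j < -K. inner_sum n a j z = 0) \<and>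
          (\<lambda>N::nat. \<Sum>j\<in>{-K..int N}. inner_sum n a j z * w powi j) \<longlonglongrightarrow> f (z(m := w))"
      proof
        fix w assume w: "w \<in> Y m"
        obtain K where K: "\<forall>kn. kn < - K \<longrightarrow> inner_sum n a kn (proj_last n (z(m := w))) = 0"
          "(\<lambda>N::nat. \<Sum>kn\<in>{- K..int N}. inner_sum n a kn (proj_last n (z(m := w))) * (z(m := w)) (n - 1) powi kn)
              \<longlonglongrightarrow> f (z(m := w))"
          using outer ptS[OF w] by blast
        thus "\<exists>K. (\<forall>j < -K. inner_sum n a j z = 0) \<and>
          (\<lambda>N::nat. \<Sum>j\<in>{-K..int N}. inner_sum n a j z * w powi j) \<longlonglongrightarrow> f (z(m := w))"
          using proj by (auto simp: nm)
      qed
      show "\<forall>w\<in>Y m. ((\<lambda>j. inner_sum n c j z * w powi j) has_sum f (z(m := w))) UNIV"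
      proof
        fix w assume w: "w \<in> Y m"
        have "w \<noteq> 0" using w Y(3) by metis
        from fubini_last(2)[OF cT[OF w] this]
        show "((\<lambda>j. inner_sum n c j z * w powi j) has_sum f (z(m := w))) UNIV"
          by (simp add: inner_sum_def nm)
      qed
    qed
    show ?thesis using HA HB HC by blast
  qed
  have ac: "a k = c k" if k: "k \<in> idx n" for k
  proof -
    define kn where "kn = k m"
    define k' where "k' = k(m := 0)"
    have k': "k' \<in> idx m" "k = k'(m := kn)" using idx_Suc_split[of k m] k nm by (auto simp: k'_def kn_def)
    have "(\<lambda>k'. a (k'(m := kn)) - c (k'(m := kn))) k' = 0"
    proof (rule laurent_unique[where X=Y and m=m and b="\<lambda>k'. a (k'(m := kn)) - c (k'(m := kn))" and k=k'])
      show "\<forall>i<m. open (Y i) \<and> Y i \<noteq> {} \<and> 0 \<notin> Y i" using Y by blast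
      show "k' \<in> idx m" by (rule k'(1))
      show "\<forall>z. (\<forall>i<m. z i \<in> Y i) \<longrightarrow> ((\<lambda>k. (a (k(m := kn)) - c (k(m := kn))) * lmono m k z) has_sum 0) (idx m)"
      proof (intro allI impI)
        fix z assume z: "\<forall>i<m. z i \<in> Y i"
        define z'' where "z'' = (\<lambda>i. if i < m then z i else 0)"
        have z'': "z'' \<in> Cn m" "\<forall>i<m. z'' i \<in> Y i" using z by (auto simp: z''_def Cn_def)
        have lm: "lmono m k z = lmono m k z''" for k
          unfolding lmono_def by (rule prod.cong) (auto simp: z''_def)
        from main[OF z''(1) z''(2), of kn]
        have HA: "((\<lambda>k'. a (k'(m := kn)) * lmono m k' z'') has_sum inner_sum n a kn z'') (idx m)"
          and HB: "((\<lambda>k'. c (k'(m := kn)) * lmono m k' z'') has_sum inner_sum n c kn z'') (idx m)"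
          and HC: "inner_sum n a kn z'' = inner_sum n c kn z''" by blast+
        have "((\<lambda>k'. a (k'(m := kn)) * lmono m k' z'' + - (c (k'(m := kn)) * lmono m k' z'')) has_sum
               (inner_sum n a kn z'' + - inner_sum n c kn z'')) (idx m)"
          by (intro has_sum_add has_sum_uminusI HA HB)
        hence "((\<lambda>k'. a (k'(m := kn)) * lmono m k' z'' - c (k'(m := kn)) * lmono m k' z'') has_sum 0) (idx m)"
          using HC by simp
        thus "((\<lambda>k. (a (k(m := kn)) - c (k(m := kn))) * lmono m k z) has_sum 0) (idx m)"
          by (simp add: lm algebra_simps)
      qed
    qed
    thus ?thesis using k'(2) by simp
  qed
  show ?thesis
  proof
    fix z assume zT: "z \<in> T"
    have L: "laurent_abs_conv_to n c z (f z)" using c1 zT by blast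
    have e1: "terms_defined n a z = terms_defined n c z"
      unfolding terms_defined_def using ac by auto
    have e2: "((\<lambda>k. norm (a k * lmono n k z)) summable_on idx n) = ((\<lambda>k. norm (c k * lmono n k z)) summable_on idx n)"
      by (rule summable_on_cong) (simp add: ac)
    have e3: "((\<lambda>k. a k * lmono n k z) has_sum f z) (idx n) = ((\<lambda>k. c k * lmono n k z) has_sum f z) (idx n)"
      by (rule has_sum_cong) (simp add: ac)
    show "laurent_abs_conv_to n a z (f z)" using L e1 e2 e3 by (simp add: laurent_abs_conv_to_def)
  qed
qed

end
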